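(* Let $X$ be a real Banach space. The following statements are equivalent. (1) $X$ is CLUR. (2) $S_X$ is sup-compact on $X\setminus\{0\}$. (3) For every $x\in X\setminus\{0\}$, $Q_{S_X}(x)$ is compact and $Q_{S_X}(x,\frac1n)\xrightarrow{V}Q_{S_X}(x)$. (4) For every $x\in X\setminus\{0\}$, $Q_{S_X}(x)$ is compact and $Q_{S_X}(x,\frac1n)\xrightarrow{H}Q_{S_X}(x)$. (5) $Q_{S_X}(x)$ is compact for every $x\in X\setminus\{0\}$ and $S_X$ is strongly remotal on $X\setminus\{0\}$. (6) $\alpha(Q_{S_X}(x,\frac1n))\to 0$ for every $x\in X\setminus\{0\}$.
   Context: $B_X,S_X$ are the closed unit ball and unit sphere of $X$. For non-empty bounded $F$, $x\in X$, $\delta\ge0$: $r(F,x)=\sup_{y\in F}\|x-y\|$, $Q_F(x,\delta)=\{y\in F:\|x-y\|\ge r(F,x)-\delta\}$, $Q_F(x)=Q_F(x,0)$. $F$ is sup-compact on $A$ if for each $x\in A$ every sequence $(y_n)$ in $F$ with $\|x-y_n\|\to r(F,x)$ has a subsequence converging to an element of $F$. $F$ is strongly remotal on $A$ if for every $x\in A$ and $\epsilon>0$ there is $\delta>0$ with $Q_F(x,\delta)\subseteq Q_F(x)+\epsilon B_X$. $X$ is CLUR if whenever $x\in S_X$ and $(x_n)\subseteq S_X$ satisfy $\|\frac{x_n+x}{2}\|\to1$, $(x_n)$ has a convergent subsequence. For closed bounded sets $C_n,C_0$: $C_n\xrightarrow{V}C_0$ means both (a) for every open $U\supseteq C_0$,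 eventually $C_n\subseteq U$, and (b) for every open $U$ with $C_0\cap U\ne\emptyset$, eventually $C_n\cap U\neq\emptyset$; $C_n\xrightarrow{H}C_0$ means for every $\epsilon>0$, eventually $C_n\subseteq C_0+\epsilon B_X$ and $C_0\subseteq C_n+\epsilon B_X$. The Kuratowski measure of non-compactness is $\alpha(A)=\inf\{\epsilon>0: A\subseteq E+\epsilon B_X$ for some finite $E\subseteq X\}$. *)

theory Defs
  imports "HOL-Analysis.Analysis"
begin

definition rad :: "'a::real_normed_vector set \<Rightarrow> 'a \<Rightarrow> real" where
  "rad F x = (SUP y\<in>F. norm (x - y))"

definition Qset :: "'a::real_normed_vector set \<Rightarrow> 'a \<Rightarrow> real \<Rightarrow> 'a set" where
  "Qset F x \<delta> = {y \<in> F. norm (x - y) \<ge> rad F x - \<delta>}"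

definition enlarge :: "'a::real_normed_vector set \<Rightarrow> real \<Rightarrow> 'a set" where
  "enlarge A \<epsilon> = {a + b | a b. a \<in> A \<and> b \<in> cball 0 \<epsilon>}"

definition sup_compact_on :: "'a::real_normed_vector set \<Rightarrow> 'a set \<Rightarrow> bool" where
  "sup_compact_on F A \<longleftrightarrow> (\<forall>x\<in>A. \<forall>y::nat \<Rightarrow> 'a. (\<forall>n. y n \<in> F) \<and>
      ((\<lambda>n. norm (x - y n)) \<longlonglongrightarrow> rad F x) \<longrightarrow>
      (\<exists>r l. strict_mono r \<and> l \<in> F \<and> (y \<circ> r) \<longlonglongrightarrow> l))"

definition strongly_remotal_on :: "'a::real_normed_vector set \<Rightarrow> 'a set \<Rightarrow> bool" where
  "strongly_remotal_on F A \<longleftrightarrow> (\<forall>x\<in>A. \<forall>\<epsilon>>0. \<exists>\<delta>>0.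
      Qset F x \<delta> \<subseteq> enlarge (Qset F x 0) \<epsilon>)"

definition CLUR :: "'a::real_normed_vector itself \<Rightarrow> bool" where
  "CLUR _ \<longleftrightarrow> (\<forall>x::'a. \<forall>xs::nat \<Rightarrow> 'a. x \<in> sphere 0 1 \<and> (\<forall>n. xs n \<in> sphere 0 1) \<and>
      ((\<lambda>n. norm ((1/2) *\<^sub>R (xs n + x))) \<longlonglongrightarrow> 1) \<longrightarrow>
      (\<exists>r l. strict_mono r \<and> (xs \<circ> r) \<longlonglongrightarrow> l))"

definition vietoris_conv :: "(nat \<Rightarrow> 'a::topological_space set) \<Rightarrow> 'a set \<Rightarrow> bool" where
  "vietoris_conv C C0 \<longleftrightarrow>
     (\<forall>U. open U \<and> C0 \<subseteq> U \<longrightarrow> (\<forall>\<^sub>F n in sequentially. C n \<subseteq> U)) \<and>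
     (\<forall>U. open U \<and> C0 \<inter> U \<noteq> {} \<longrightarrow> (\<forall>\<^sub>F n in sequentially. C n \<inter> U \<noteq> {}))"

definition hausdorff_conv :: "(nat \<Rightarrow> 'a::real_normed_vector set) \<Rightarrow> 'a set \<Rightarrow> bool" where
  "hausdorff_conv C C0 \<longleftrightarrow> (\<forall>\<epsilon>>0. \<forall>\<^sub>F n in sequentially.
      C n \<subseteq> enlarge C0 \<epsilon> \<and> C0 \<subseteq> enlarge (C n) \<epsilon>)"

definition kuratowski :: "'a::real_normed_vector set \<Rightarrow> real" where
  "kuratowski A = Inf {\<epsilon>. \<epsilon> > 0 \<and> (\<exists>E. finite E \<and> A \<subseteq> enlarge E \<epsilon>)}"

end

theory Submission
  imports Defs "HOL-Analysis.Analysis"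
begin


lemma subseq_of_tb:
  fixes y :: "nat \<Rightarrow> 'a::complete_space"
  assumes tb: "\<And>e. e > 0 \<Longrightarrow> \<exists>k. finite k \<and> (\<forall>\<^sub>F n in sequentially. y n \<in> (\<Union>c\<in>k. ball c e))"
  shows "\<exists>r l. strict_mono r \<and> (y \<circ> r) \<longlonglongrightarrow> l"
proof -
  let ?C = "closure (range y)"
  have tb2: "\<exists>k. finite k \<and> range y \<subseteq> (\<Union>c\<in>k. ball c e)" if e0: "e > 0" for e
  proof -
    obtain k where k: "finite k" "\<forall>\<^sub>F n in sequentially. y n \<in> (\<Union>c\<in>k. ball c e)"
      using tb[OF e0] by blast
    then obtain N where N: "\<And>n. n \<ge> N \<Longrightarrow> y n \<in> (\<Union>c\<in>k. ball c e)"
      by (auto simp: eventually_sequentially)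
    have "range y \<subseteq> (\<Union>c\<in>k \<union> y ` {..<N}. ball c e)"
    proof
      fix z assume "z \<in> range y"
      then obtain n where z: "z = y n" by auto
      show "z \<in> (\<Union>c\<in>k \<union> y ` {..<N}. ball c e)"
      proof (cases "n < N")
        case True
        then have "y n \<in> ball (y n) e" "y n \<in> y ` {..<N}" using \<open>e > 0\<close> by auto
        then show ?thesis using z by blast
      next
        case False then show ?thesis using N[of n] z by auto
      qed
    qed
    moreover have "finite (k \<union> y ` {..<N})" using k(1) by simp
    ultimately show ?thesis by (intro exI[of _ "k \<union> y ` {..<N}"]) simp
  qed
  have "compact ?C"
    unfolding compact_eq_totally_bounded
  proof safe
    show "complete ?C" by (simp add: complete_eq_closed)
    fix e :: real assume "e > 0"
    then obtain k where k: "finite k" "range y \<subseteq> (\<Union>c\<in>k. ball c (e/2))"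
      using tb2[of "e/2"] by auto
    have "range y \<subseteq> (\<Union>c\<in>k. cball c (e/2))" using k(2) by (rule order_trans) (intro UN_mono; simp add: ball_subset_cball)
    moreover have "closed (\<Union>c\<in>k. cball c (e/2))" using k(1) by (intro closed_UN) auto
    ultimately have "?C \<subseteq> (\<Union>c\<in>k. cball c (e/2))" by (rule closure_minimal)
    also have "\<dots> \<subseteq> (\<Union>c\<in>k. ball c e)" using \<open>e > 0\<close> by (intro UN_mono) (simp_all add: subset_eq)
    finally show "\<exists>k. finite k \<and> ?C \<subseteq> (\<Union>x\<in>k. ball x e)" using k(1) by (intro exI[of _ k]) simp
  qed
  then have "seq_compact ?C" by (rule compact_imp_seq_compact)
  moreover have "\<forall>n. y n \<in> ?C" using closure_subset[of "range y"] by auto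
  ultimately obtain l r where "strict_mono r" "(y \<circ> r) \<longlonglongrightarrow> l" by (rule seq_compactE)
  then show ?thesis by (intro exI conjI)
qed

lemma rad_sphere:
  fixes x :: "'a::real_normed_vector"
  assumes "x \<noteq> 0"
  shows "rad (sphere 0 1) x = norm x + 1"
proof -
  let ?u = "- (1 / norm x) *\<^sub>R x"
  have u: "?u \<in> sphere 0 1" using assms by simp
  have "norm (x - ?u) = norm ((1 + 1 / norm x) *\<^sub>R x)"
    by (simp add: algebra_simps)
  also have "\<dots> = norm x + 1" using assms
    by (simp add: distrib_right add_pos_pos)
  finally have eq: "norm (x - ?u) = norm x + 1" .
  have le: "norm (x - y) \<le> norm x + 1" if "y \<in> sphere 0 1" for y
    using that norm_triangle_ineq4[of x y] by simp
  show ?thesis unfolding rad_def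
  proof (rule cSup_eq_maximum)
    show "norm x + 1 \<in> (\<lambda>y. norm (x - y)) ` sphere 0 1"
      using u eq by (metis image_eqI)
  qed (use le in auto)
qed

lemma Qset_mono: "d \<le> d' \<Longrightarrow> Qset F x d \<subseteq> Qset F x d'"
  unfolding Qset_def by auto

lemma norm_le_R: "y \<in> sphere 0 1 \<Longrightarrow> norm (x - y) \<le> norm x + 1"
  using norm_triangle_ineq4[of x y] by simp

lemma Q_mem:
  fixes x :: "'a::real_normed_vector"
  assumes "x \<noteq> 0"
  shows "y \<in> Qset (sphere 0 1) x d \<longleftrightarrow> norm y = 1 \<and> norm x + 1 - d \<le> norm (x - y)"
  unfolding Qset_def rad_sphere[OF assms] by simp

lemma lim_in_Q0:
  fixes x :: "'a::real_normed_vector"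
  assumes x: "x \<noteq> 0" and y: "\<And>n. norm (y n) = 1"
    and lim: "(\<lambda>n. norm (x - y n)) \<longlonglongrightarrow> norm x + 1"
    and r: "strict_mono r" and l: "(y \<circ> r) \<longlonglongrightarrow> l"
  shows "l \<in> Qset (sphere 0 1) x 0"
proof -
  have "(\<lambda>n. norm ((y \<circ> r) n)) \<longlonglongrightarrow> norm l" using l by (rule tendsto_norm)
  moreover have "(\<lambda>n. norm ((y \<circ> r) n)) = (\<lambda>n. 1)" using y by auto
  ultimately have "(\<lambda>n. 1::real) \<longlonglongrightarrow> norm l" by simp
  from LIMSEQ_unique[OF tendsto_const this] have n1: "norm l = 1" by simp
  have "(\<lambda>n. norm (x - (y \<circ> r) n)) \<longlonglongrightarrow> norm (x - l)"
    using l by (intro tendsto_norm tendsto_diff tendsto_const)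
  moreover have "(\<lambda>n. norm (x - (y \<circ> r) n)) \<longlonglongrightarrow> norm x + 1"
    using LIMSEQ_subseq_LIMSEQ[OF lim r] by (simp add: comp_def)
  ultimately have "norm (x - l) = norm x + 1"
    by (rule LIMSEQ_unique)
  then show ?thesis using n1 by (simp add: Q_mem[OF x])
qed

definition SCx :: "'a::real_normed_vector \<Rightarrow> bool" where
  "SCx x \<longleftrightarrow> (\<forall>y::nat \<Rightarrow> 'a. (\<forall>n. y n \<in> sphere 0 1) \<and>
      ((\<lambda>n. norm (x - y n)) \<longlonglongrightarrow> rad (sphere 0 1) x) \<longrightarrow>
      (\<exists>r l. strict_mono r \<and> l \<in> sphere 0 1 \<and> (y \<circ> r) \<longlonglongrightarrow> l))"

definition SRx :: "'a::real_normed_vector \<Rightarrow> bool" where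
  "SRx x \<longleftrightarrow> (\<forall>\<epsilon>>0. \<exists>\<delta>>0.
      Qset (sphere 0 1) x \<delta> \<subseteq> enlarge (Qset (sphere 0 1) x 0) \<epsilon>)"

lemma SCxD:
  fixes x :: "'a::real_normed_vector"
  assumes "SCx x" "x \<noteq> 0" "\<And>n. norm (y n) = 1" "(\<lambda>n. norm (x - y n)) \<longlonglongrightarrow> norm x + 1"
  obtains r l where "strict_mono r" "l \<in> Qset (sphere 0 1) x 0" "(y \<circ> r) \<longlonglongrightarrow> l"
proof -
  have "\<exists>r l. strict_mono r \<and> l \<in> sphere 0 1 \<and> (y \<circ> r) \<longlonglongrightarrow> l"
    using assms(1)[unfolded SCx_def rad_sphere[OF assms(2)], rule_format, of y] assms(3,4) by simp
  then obtain r l where "strict_mono r" "(y \<circ> r) \<longlonglongrightarrow> l" by blast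
  then show ?thesis using that lim_in_Q0[OF assms(2-4)] by blast
qed

lemma SC_compact:
  fixes x :: "'a::real_normed_vector"
  assumes "SCx x" "x \<noteq> 0"
  shows "compact (Qset (sphere 0 1) x 0)"
proof -
  have "seq_compact (Qset (sphere 0 1) x 0)"
  proof (rule seq_compactI)
    fix f :: "nat \<Rightarrow> 'a" assume f: "\<forall>n. f n \<in> Qset (sphere 0 1) x 0"
    then have n: "\<And>n. norm (f n) = 1" and e0: "\<And>n. norm x + 1 \<le> norm (x - f n)"
      using f Q_mem[OF assms(2)] by auto
    have e: "norm (x - f n) = norm x + 1" for n
      using e0[of n] norm_le_R[of "f n" x] n[of n] by simp
    have "(\<lambda>n. norm (x - f n)) \<longlonglongrightarrow> norm x + 1" unfolding e by simp
    from SCxD[OF assms(1,2), of f, OF n this] obtain r l where "strict_mono r" "l \<in> Qset (sphere 0 1) x 0" "(f \<circ> r) \<longlonglongrightarrow> l"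
      by blast
    then show "\<exists>l\<in>Qset (sphere 0 1) x 0. \<exists>r. strict_mono r \<and> (f \<circ> r) \<longlonglongrightarrow> l" by blast
  qed
  then show ?thesis by (rule seq_compact_imp_Heine_Borel)
qed

lemma inv_Suc_lim: "(\<lambda>n. 1 / real (Suc n)) \<longlonglongrightarrow> 0"
  using LIMSEQ_inverse_real_of_nat by (simp add: inverse_eq_divide)

lemma SC_SR:
  fixes x :: "'a::real_normed_vector"
  assumes sc: "SCx x" and x: "x \<noteq> 0"
  shows "SRx x"
  unfolding SRx_def
proof (intro allI impI, rule ccontr)
  fix \<epsilon> :: real assume e: "\<epsilon> > 0"
  assume "\<not> (\<exists>\<delta>>0. Qset (sphere 0 1) x \<delta> \<subseteq> enlarge (Qset (sphere 0 1) x 0) \<epsilon>)"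
  note ns = this
  have "\<exists>z. z \<in> Qset (sphere 0 1) x (1 / real (Suc n)) \<and> z \<notin> enlarge (Qset (sphere 0 1) x 0) \<epsilon>" for n
  proof -
    have "1 / real (Suc n) > 0" by simp
    then have "\<not> Qset (sphere 0 1) x (1 / real (Suc n)) \<subseteq> enlarge (Qset (sphere 0 1) x 0) \<epsilon>"
      using ns by blast
    then show ?thesis by (simp add: subset_iff)
  qed
  then obtain y where y: "\<And>n. y n \<in> Qset (sphere 0 1) x (1 / real (Suc n))"
     "\<And>n. y n \<notin> enlarge (Qset (sphere 0 1) x 0) \<epsilon>" by metis
  have yn: "\<And>n. norm (y n) = 1" and lo: "\<And>n. norm x + 1 - 1 / real (Suc n) \<le> norm (x - y n)"
    using y(1) Q_mem[OF x] by auto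
  have hi: "\<And>n. norm (x - y n) \<le> norm x + 1" using yn norm_le_R by auto
  have lim: "(\<lambda>n. norm (x - y n)) \<longlonglongrightarrow> norm x + 1"
  proof (rule real_tendsto_sandwich[OF _ _ _ tendsto_const])
    show "\<forall>\<^sub>F n in sequentially. norm x + 1 - 1 / real (Suc n) \<le> norm (x - y n)" using lo by simp
    show "\<forall>\<^sub>F n in sequentially. norm (x - y n) \<le> norm x + 1" using hi by simp
    show "(\<lambda>n. norm x + 1 - 1 / real (Suc n)) \<longlonglongrightarrow> norm x + 1"
      using tendsto_diff[OF tendsto_const inv_Suc_lim, of "norm x + 1"] by simp
  qed
  obtain r l where r: "strict_mono r" and l: "l \<in> Qset (sphere 0 1) x 0" and c: "(y \<circ> r) \<longlonglongrightarrow> l"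
    using SCxD[OF sc x yn lim] by blast
  have "\<forall>\<^sub>F n in sequentially. dist ((y \<circ> r) n) l < \<epsilon>" using c e by (rule tendstoD)
  then obtain n where "dist (y (r n)) l < \<epsilon>" by (metis comp_apply eventually_sequentially order_refl)
  then have "norm (y (r n) - l) \<le> \<epsilon>" by (simp add: dist_norm)
  then have "y (r n) = l + (y (r n) - l) \<and> y (r n) - l \<in> cball 0 \<epsilon>" by (simp add: dist_norm norm_minus_commute)
  then have "y (r n) \<in> enlarge (Qset (sphere 0 1) x 0) \<epsilon>" unfolding enlarge_def using l by blast
  then show False using y(2) by blast
qed

lemma eventually_small:
  assumes "d > 0" shows "\<forall>\<^sub>F n in sequentially. 1 / real (Suc n) \<le> d"
  using order_tendstoD(2)[OF inv_Suc_lim assms] by (rule eventually_mono) (rule less_imp_le)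

lemma enlarge_mono_set: "A \<subseteq> B \<Longrightarrow> enlarge A e \<subseteq> enlarge B e"
  unfolding enlarge_def by blast

lemma subset_enlarge: "e \<ge> 0 \<Longrightarrow> A \<subseteq> enlarge A e"
proof
  fix a assume "e \<ge> 0" "a \<in> A"
  then have "a = a + 0 \<and> (0::'a) \<in> cball 0 e" by simp
  then show "a \<in> enlarge A e" unfolding enlarge_def using \<open>a \<in> A\<close> by blast
qed

lemma SR_haus:
  fixes x :: "'a::real_normed_vector"
  assumes "SRx x"
  shows "hausdorff_conv (\<lambda>n. Qset (sphere 0 1) x (1 / real (Suc n))) (Qset (sphere 0 1) x 0)"
  unfolding hausdorff_conv_def
proof (intro allI impI)
  fix e :: real assume e: "e > 0"
  then obtain d where d: "d > 0" "Qset (sphere 0 1) x d \<subseteq> enlarge (Qset (sphere 0 1) x 0) e"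
    using assms unfolding SRx_def by blast
  show "\<forall>\<^sub>F n in sequentially. Qset (sphere 0 1) x (1 / real (Suc n)) \<subseteq> enlarge (Qset (sphere 0 1) x 0) e \<and>
          Qset (sphere 0 1) x 0 \<subseteq> enlarge (Qset (sphere 0 1) x (1 / real (Suc n))) e"
    using eventually_small[OF d(1)]
  proof (rule eventually_mono)
    fix n assume n: "1 / real (Suc n) \<le> d"
    have "Qset (sphere 0 1) x (1 / real (Suc n)) \<subseteq> Qset (sphere 0 1) x d" using n by (rule Qset_mono)
    then have 1: "Qset (sphere 0 1) x (1 / real (Suc n)) \<subseteq> enlarge (Qset (sphere 0 1) x 0) e"
      using d(2) by (rule order_trans)
    have "Qset (sphere 0 1) x 0 \<subseteq> Qset (sphere 0 1) x (1 / real (Suc n))" by (rule Qset_mono) simp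
    also have "\<dots> \<subseteq> enlarge (Qset (sphere 0 1) x (1 / real (Suc n))) e"
      using e by (intro subset_enlarge) simp
    finally show "Qset (sphere 0 1) x (1 / real (Suc n)) \<subseteq> enlarge (Qset (sphere 0 1) x 0) e \<and>
          Qset (sphere 0 1) x 0 \<subseteq> enlarge (Qset (sphere 0 1) x (1 / real (Suc n))) e"
      using 1 by (rule conjI[rotated])
  qed
qed

lemma enlarge_sub_UN': "r < e \<Longrightarrow> enlarge A r \<subseteq> (\<Union>x\<in>A. ball x e)"
proof
  fix z assume e: "r < e" and "z \<in> enlarge A r"
  then obtain a b where z: "z = a + b" "a \<in> A" "norm b \<le> r" unfolding enlarge_def by auto
  then have "dist a z < e" using e by (simp add: dist_norm)
  then show "z \<in> (\<Union>x\<in>A. ball x e)" using z(2) by auto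
qed

lemma enlarge_sub_UN: "e > 0 \<Longrightarrow> enlarge A (e/2) \<subseteq> (\<Union>x\<in>A. ball x e)"
  by (rule enlarge_sub_UN') simp


lemma compact_haus_viet:
  fixes x :: "'a::real_normed_vector"
  assumes c: "compact (Qset (sphere 0 1) x 0)"
    and h: "hausdorff_conv (\<lambda>n. Qset (sphere 0 1) x (1 / real (Suc n))) (Qset (sphere 0 1) x 0)"
  shows "vietoris_conv (\<lambda>n. Qset (sphere 0 1) x (1 / real (Suc n))) (Qset (sphere 0 1) x 0)"
  unfolding vietoris_conv_def
proof (intro conjI allI impI)
  fix U assume U: "open U \<and> Qset (sphere 0 1) x 0 \<subseteq> U"
  then obtain e where e: "e > 0" "(\<Union>z\<in>Qset (sphere 0 1) x 0. ball z e) \<subseteq> U"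
    using compact_subset_open_imp_ball_epsilon_subset[OF c] by metis
  have "\<forall>\<^sub>F n in sequentially. Qset (sphere 0 1) x (1 / real (Suc n)) \<subseteq> enlarge (Qset (sphere 0 1) x 0) (e/2)"
    using h e(1) unfolding hausdorff_conv_def
    by (metis (mono_tags, lifting) eventually_mono half_gt_zero)
  then show "\<forall>\<^sub>F n in sequentially. Qset (sphere 0 1) x (1 / real (Suc n)) \<subseteq> U"
  proof (rule eventually_mono)
    fix n assume "Qset (sphere 0 1) x (1 / real (Suc n)) \<subseteq> enlarge (Qset (sphere 0 1) x 0) (e/2)"
    also have "\<dots> \<subseteq> (\<Union>z\<in>Qset (sphere 0 1) x 0. ball z e)" using e(1) by (rule enlarge_sub_UN)
    finally show "Qset (sphere 0 1) x (1 / real (Suc n)) \<subseteq> U" using e(2) by (rule order_trans)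
  qed
next
  fix U assume U: "open U \<and> Qset (sphere 0 1) x 0 \<inter> U \<noteq> {}"
  have "Qset (sphere 0 1) x 0 \<subseteq> Qset (sphere 0 1) x (1 / real (Suc n))" for n by (rule Qset_mono) simp
  then show "\<forall>\<^sub>F n in sequentially. Qset (sphere 0 1) x (1 / real (Suc n)) \<inter> U \<noteq> {}"
    using U by (intro always_eventually allI) blast
qed


lemma ev_in_Q:
  fixes x :: "'a::real_normed_vector"
  assumes x: "x \<noteq> 0" and y: "\<And>n. norm (y n) = 1"
    and lim: "(\<lambda>n. norm (x - y n)) \<longlonglongrightarrow> norm x + 1"
  shows "\<forall>\<^sub>F m in sequentially. y m \<in> Qset (sphere 0 1) x (1 / real (Suc N))"
proof -
  have "norm x + 1 - 1 / real (Suc N) < norm x + 1" by simp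
  from order_tendstoD(1)[OF lim this]
  show ?thesis by (rule eventually_mono) (simp add: Q_mem[OF x] y less_imp_le)
qed

lemma SC_from_tb:
  fixes x :: "'a::banach"
  assumes x: "x \<noteq> 0"
    and tb: "\<And>e. e > 0 \<Longrightarrow> \<exists>k N. finite k \<and> Qset (sphere 0 1) x (1 / real (Suc N)) \<subseteq> (\<Union>c\<in>k. ball c e)"
  shows "SCx x"
  unfolding SCx_def rad_sphere[OF x]
proof (intro allI impI)
  fix y :: "nat \<Rightarrow> 'a"
  assume a: "(\<forall>n. y n \<in> sphere 0 1) \<and> (\<lambda>n. norm (x - y n)) \<longlonglongrightarrow> norm x + 1"
  then have yn: "\<And>n. norm (y n) = 1" and lim: "(\<lambda>n. norm (x - y n)) \<longlonglongrightarrow> norm x + 1" by auto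
  have "\<exists>r l. strict_mono r \<and> (y \<circ> r) \<longlonglongrightarrow> l"
  proof (rule subseq_of_tb)
    fix e :: real assume "e > 0"
    then obtain k N where k: "finite k" "Qset (sphere 0 1) x (1 / real (Suc N)) \<subseteq> (\<Union>c\<in>k. ball c e)"
      using tb by blast
    have "\<forall>\<^sub>F m in sequentially. y m \<in> (\<Union>c\<in>k. ball c e)"
      using ev_in_Q[OF x yn lim, of N] by (rule eventually_mono) (use k(2) in \<open>rule subsetD\<close>)
    then show "\<exists>k. finite k \<and> (\<forall>\<^sub>F n in sequentially. y n \<in> (\<Union>c\<in>k. ball c e))"
      using k(1) by blast
  qed
  then obtain r l where r: "strict_mono r" and l: "(y \<circ> r) \<longlonglongrightarrow> l" by blast
  have "l \<in> Qset (sphere 0 1) x 0" by (rule lim_in_Q0[OF x yn lim r l])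
  then have "l \<in> sphere 0 1" unfolding Qset_def by simp
  then show "\<exists>r l. strict_mono r \<and> l \<in> sphere 0 1 \<and> (y \<circ> r) \<longlonglongrightarrow> l" using r l by blast
qed

lemma viet_SC:
  fixes x :: "'a::banach"
  assumes x: "x \<noteq> 0" and c: "compact (Qset (sphere 0 1) x 0)"
    and v: "vietoris_conv (\<lambda>n. Qset (sphere 0 1) x (1 / real (Suc n))) (Qset (sphere 0 1) x 0)"
  shows "SCx x"
proof (rule SC_from_tb[OF x])
  fix e :: real assume e: "e > 0"
  then obtain k where k: "finite k" "Qset (sphere 0 1) x 0 \<subseteq> (\<Union>c\<in>k. ball c e)"
    using c[unfolded compact_eq_totally_bounded] e by blast
  have "open (\<Union>c\<in>k. ball c e)" by (intro open_UN ballI open_ball)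
  then have "\<forall>\<^sub>F n in sequentially. Qset (sphere 0 1) x (1 / real (Suc n)) \<subseteq> (\<Union>c\<in>k. ball c e)"
    using v[unfolded vietoris_conv_def] k(2) by simp
  then obtain N where "Qset (sphere 0 1) x (1 / real (Suc N)) \<subseteq> (\<Union>c\<in>k. ball c e)"
    unfolding eventually_sequentially by blast
  then show "\<exists>k N. finite k \<and> Qset (sphere 0 1) x (1 / real (Suc N)) \<subseteq> (\<Union>c\<in>k. ball c e)"
    using k(1) by blast
qed

lemma sphere_enlarge: "sphere (0::'a::real_normed_vector) 1 \<subseteq> enlarge {0} 1"
proof
  fix z :: 'a assume "z \<in> sphere 0 1"
  then have "z = 0 + z \<and> z \<in> cball 0 1" by simp
  then show "z \<in> enlarge {0} 1" unfolding enlarge_def by blast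
qed

lemma kur_set_ne:
  fixes A :: "'a::real_normed_vector set"
  assumes "A \<subseteq> sphere 0 1"
  shows "1 \<in> {\<epsilon>. \<epsilon> > 0 \<and> (\<exists>E. finite E \<and> A \<subseteq> enlarge E \<epsilon>)}"
proof -
  have "A \<subseteq> enlarge {0} 1" using assms sphere_enlarge by (rule order_trans)
  then show ?thesis by (intro CollectI conjI exI[of _ "{0}"]) auto
qed

lemma kur_bdd: "bdd_below {\<epsilon>. \<epsilon> > 0 \<and> (\<exists>E. finite E \<and> A \<subseteq> enlarge E \<epsilon>)}"
  by (rule bdd_belowI[of _ 0]) simp

lemma kur_nonneg:
  fixes A :: "'a::real_normed_vector set"
  assumes "A \<subseteq> sphere 0 1"
  shows "kuratowski A \<ge> 0"
  unfolding kuratowski_def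
  apply (rule cInf_greatest)
  using kur_set_ne[OF assms] apply blast
  by simp

lemma kur_le:
  fixes A :: "'a::real_normed_vector set"
  assumes "e > 0" "finite E" "A \<subseteq> enlarge E e"
  shows "kuratowski A \<le> e"
  unfolding kuratowski_def
  by (rule cInf_lower[OF _ kur_bdd]) (use assms in blast)

lemma kur_lt:
  fixes A :: "'a::real_normed_vector set"
  assumes "A \<subseteq> sphere 0 1" "kuratowski A < e"
  shows "\<exists>r E. r < e \<and> finite E \<and> A \<subseteq> enlarge E r"
proof -
  have "{\<epsilon>. \<epsilon> > 0 \<and> (\<exists>E. finite E \<and> A \<subseteq> enlarge E \<epsilon>)} \<noteq> {}" using kur_set_ne[OF assms(1)] by blast
  from cInf_lessD[OF this assms(2)[unfolded kuratowski_def]] show ?thesis by blast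
qed

lemma Qsub: "Qset (sphere 0 1) x d \<subseteq> sphere 0 1"
  unfolding Qset_def by blast

lemma kur_SC:
  fixes x :: "'a::banach"
  assumes x: "x \<noteq> 0"
    and k: "(\<lambda>n. kuratowski (Qset (sphere 0 1) x (1 / real (Suc n)))) \<longlonglongrightarrow> 0"
  shows "SCx x"
proof (rule SC_from_tb[OF x])
  fix e :: real assume e: "e > 0"
  from order_tendstoD(2)[OF k e] obtain N where "kuratowski (Qset (sphere 0 1) x (1 / real (Suc N))) < e"
    unfolding eventually_sequentially by blast
  from kur_lt[OF Qsub this] obtain r E where r: "r < e" "finite E" "Qset (sphere 0 1) x (1 / real (Suc N)) \<subseteq> enlarge E r"
    by blast
  have "Qset (sphere 0 1) x (1 / real (Suc N)) \<subseteq> (\<Union>c\<in>E. ball c e)"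
    using r(3) enlarge_sub_UN'[OF r(1)] by (rule order_trans)
  then show "\<exists>k N. finite k \<and> Qset (sphere 0 1) x (1 / real (Suc N)) \<subseteq> (\<Union>c\<in>k. ball c e)"
    using r(2) by blast
qed

lemma enlarge_UN:
  fixes A :: "'a::real_normed_vector set"
  assumes "A \<subseteq> (\<Union>c\<in>k. ball c r)" "s \<ge> 0"
  shows "enlarge A s \<subseteq> enlarge k (r + s)"
proof
  fix z assume "z \<in> enlarge A s"
  then obtain a b where z: "z = a + b" "a \<in> A" "norm b \<le> s" unfolding enlarge_def by auto
  have "a \<in> (\<Union>c\<in>k. ball c r)" using assms(1) z(2) by (rule subsetD)
  then obtain c where c: "c \<in> k" "dist c a < r" by auto
  have "norm ((a - c) + b) \<le> norm (a - c) + norm b" by (rule norm_triangle_ineq)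
  also have "\<dots> \<le> r + s" using c(2) z(3) by (simp add: dist_norm norm_minus_commute)
  finally have "z = c + ((a - c) + b) \<and> (a - c) + b \<in> cball 0 (r + s)" using z(1) by simp
  then show "z \<in> enlarge k (r + s)" unfolding enlarge_def using c(1) by blast
qed

lemma SC_kur:
  fixes x :: "'a::real_normed_vector"
  assumes c: "compact (Qset (sphere 0 1) x 0)" and sr: "SRx x"
  shows "(\<lambda>n. kuratowski (Qset (sphere 0 1) x (1 / real (Suc n)))) \<longlonglongrightarrow> 0"
proof (rule order_tendstoI)
  fix a :: real assume "a < 0"
  show "\<forall>\<^sub>F n in sequentially. a < kuratowski (Qset (sphere 0 1) x (1 / real (Suc n)))"
  proof (intro always_eventually allI)
    fix n show "a < kuratowski (Qset (sphere 0 1) x (1 / real (Suc n)))"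
      using \<open>a < 0\<close> kur_nonneg[OF Qsub, of x "1 / real (Suc n)"] by linarith
  qed
next
  fix e :: real assume e: "0 < e"
  then have e4: "e/4 > 0" by simp
  then obtain k where k: "finite k" "Qset (sphere 0 1) x 0 \<subseteq> (\<Union>c\<in>k. ball c (e/4))"
    using c[unfolded compact_eq_totally_bounded] e by blast
  obtain d where d: "d > 0" "Qset (sphere 0 1) x d \<subseteq> enlarge (Qset (sphere 0 1) x 0) (e/4)"
    using sr e4 unfolding SRx_def by blast
  have en: "enlarge (Qset (sphere 0 1) x 0) (e/4) \<subseteq> enlarge k (e/4 + e/4)"
    using k(2) e4 by (intro enlarge_UN) auto
  show "\<forall>\<^sub>F n in sequentially. kuratowski (Qset (sphere 0 1) x (1 / real (Suc n))) < e"
    using eventually_small[OF d(1)]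
  proof (rule eventually_mono)
    fix n assume n: "1 / real (Suc n) \<le> d"
    have "Qset (sphere 0 1) x (1 / real (Suc n)) \<subseteq> Qset (sphere 0 1) x d" using n by (rule Qset_mono)
    also have "\<dots> \<subseteq> enlarge k (e/4 + e/4)" using d(2) en by (rule order_trans)
    finally have sub: "Qset (sphere 0 1) x (1 / real (Suc n)) \<subseteq> enlarge k (e/4 + e/4)" .
    have "e/4 + e/4 > 0" using e4 by simp
    from kur_le[OF this k(1) sub]
    have "kuratowski (Qset (sphere 0 1) x (1 / real (Suc n))) \<le> e/4 + e/4" .
    then show "kuratowski (Qset (sphere 0 1) x (1 / real (Suc n))) < e" using e by simp
  qed
qed

lemma CLUR_to_SC:
  fixes x :: "'a::banach"
  assumes cl: "CLUR TYPE('a)" and x: "x \<noteq> 0"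
  shows "SCx x"
  unfolding SCx_def rad_sphere[OF x]
proof (intro allI impI)
  fix y :: "nat \<Rightarrow> 'a"
  assume a: "(\<forall>n. y n \<in> sphere 0 1) \<and> (\<lambda>n. norm (x - y n)) \<longlonglongrightarrow> norm x + 1"
  then have yn: "\<And>n. norm (y n) = 1" and lim: "(\<lambda>n. norm (x - y n)) \<longlonglongrightarrow> norm x + 1" by auto
  define t where "t = norm x"
  define u where "u = - (1 / t) *\<^sub>R x"
  have t: "t > 0" using x unfolding t_def by simp
  have tu: "t *\<^sub>R u = - x" unfolding u_def using t by simp
  have un: "norm u = 1" unfolding u_def t_def using x by simp
  have ub: "norm (y n + u) \<le> 2" for n
    using norm_triangle_ineq[of "y n" u] yn[of n] un by simp
  have "(\<lambda>n. norm (y n + u)) \<longlonglongrightarrow> 2"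
  proof (cases "t \<ge> 1")
    case True
    have lo: "norm (x - y n) - (t - 1) \<le> norm (y n + u)" for n
    proof -
      have "x - y n = - ((y n + u) + (t - 1) *\<^sub>R u)"
        using tu by (simp add: algebra_simps)
      then have "norm (x - y n) = norm ((y n + u) + (t - 1) *\<^sub>R u)" by (simp only: norm_minus_cancel)
      also have "\<dots> \<le> norm (y n + u) + norm ((t - 1) *\<^sub>R u)" by (rule norm_triangle_ineq)
      also have "norm ((t - 1) *\<^sub>R u) = t - 1" using True un by simp
      finally show ?thesis by simp
    qed
    show ?thesis
    proof (rule real_tendsto_sandwich[OF _ _ _ tendsto_const])
      show "\<forall>\<^sub>F n in sequentially. norm (x - y n) - (t - 1) \<le> norm (y n + u)" using lo by simp
      show "\<forall>\<^sub>F n in sequentially. norm (y n + u) \<le> 2" using ub by simp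
      have "(\<lambda>n. norm (x - y n) - (t - 1)) \<longlonglongrightarrow> norm x + 1 - (t - 1)"
        using lim by (intro tendsto_diff tendsto_const)
      then show "(\<lambda>n. norm (x - y n) - (t - 1)) \<longlonglongrightarrow> 2" unfolding t_def by simp
    qed
  next
    case False
    have lo: "(norm (x - y n) - (1 - t)) / t \<le> norm (y n + u)" for n
    proof -
      have "x - y n = - (t *\<^sub>R (y n + u) + (1 - t) *\<^sub>R y n)"
        using tu by (simp add: algebra_simps)
      then have "norm (x - y n) = norm (t *\<^sub>R (y n + u) + (1 - t) *\<^sub>R y n)" by (simp only: norm_minus_cancel)
      also have "\<dots> \<le> norm (t *\<^sub>R (y n + u)) + norm ((1 - t) *\<^sub>R y n)" by (rule norm_triangle_ineq)
      also have "norm ((1 - t) *\<^sub>R y n) = 1 - t" using False yn[of n] by simp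
      also have "norm (t *\<^sub>R (y n + u)) = t * norm (y n + u)" using t by simp
      finally have "norm (x - y n) - (1 - t) \<le> t * norm (y n + u)" by simp
      then show ?thesis using t by (simp add: divide_le_eq mult.commute)
    qed
    show ?thesis
    proof (rule real_tendsto_sandwich[OF _ _ _ tendsto_const])
      show "\<forall>\<^sub>F n in sequentially. (norm (x - y n) - (1 - t)) / t \<le> norm (y n + u)" using lo by simp
      show "\<forall>\<^sub>F n in sequentially. norm (y n + u) \<le> 2" using ub by simp
      have "(\<lambda>n. (norm (x - y n) - (1 - t)) / t) \<longlonglongrightarrow> (norm x + 1 - (1 - t)) / t"
        using t by (intro tendsto_divide tendsto_diff tendsto_const lim) simp
      also have "(norm x + 1 - (1 - t)) / t = 2" using t unfolding t_def by simp
      finally show "(\<lambda>n. (norm (x - y n) - (1 - t)) / t) \<longlonglongrightarrow> 2" .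
    qed
  qed
  then have "(\<lambda>n. norm (y n + u) / 2) \<longlonglongrightarrow> 2 / 2"
    by (intro tendsto_divide tendsto_const) simp_all
  then have "(\<lambda>n. norm ((1/2) *\<^sub>R (y n + u))) \<longlonglongrightarrow> 1" by simp
  moreover have "u \<in> sphere 0 1" using un by simp
  ultimately obtain r l where r: "strict_mono r" and l: "(y \<circ> r) \<longlonglongrightarrow> l"
    using cl[unfolded CLUR_def, rule_format, of u y] a by blast
  have "l \<in> Qset (sphere 0 1) x 0" by (rule lim_in_Q0[OF x yn lim r l])
  then have "l \<in> sphere 0 1" unfolding Qset_def by simp
  then show "\<exists>r l. strict_mono r \<and> l \<in> sphere 0 1 \<and> (y \<circ> r) \<longlonglongrightarrow> l" using r l by blast
qed

lemma SC_to_CLUR: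
  assumes sc: "\<And>x::'a::banach. x \<noteq> 0 \<Longrightarrow> SCx x"
  shows "CLUR TYPE('a)"
  unfolding CLUR_def
proof (intro allI impI)
  fix x :: 'a and xs :: "nat \<Rightarrow> 'a"
  assume a: "x \<in> sphere 0 1 \<and> (\<forall>n. xs n \<in> sphere 0 1) \<and> (\<lambda>n. norm ((1/2) *\<^sub>R (xs n + x))) \<longlonglongrightarrow> 1"
  then have x1: "norm x = 1" and xn: "\<And>n. xs n \<in> sphere 0 1"
    and lim: "(\<lambda>n. norm ((1/2) *\<^sub>R (xs n + x))) \<longlonglongrightarrow> 1" by auto
  have mx: "- x \<noteq> 0" using x1 by auto
  have "(\<lambda>n. 2 * norm ((1/2) *\<^sub>R (xs n + x))) \<longlonglongrightarrow> 2 * 1"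
    using lim by (intro tendsto_mult tendsto_const)
  moreover have "2 * norm ((1/2) *\<^sub>R (xs n + x)) = norm (- x - xs n)" for n
  proof -
    have "norm (- x - xs n) = norm (xs n + x)"
      by (metis minus_diff_eq norm_minus_cancel diff_minus_eq_add add.commute)
    then show ?thesis by simp
  qed
  ultimately have "(\<lambda>n. norm (- x - xs n)) \<longlonglongrightarrow> rad (sphere 0 1) (- x)"
    unfolding rad_sphere[OF mx] using x1 by simp
  then show "\<exists>r l. strict_mono r \<and> (xs \<circ> r) \<longlonglongrightarrow> l"
    using sc[OF mx, unfolded SCx_def, rule_format, of xs] xn by blast
qed

lemma per_x:
  fixes x :: "'a::banach"
  assumes x: "x \<noteq> 0"
  shows "(SCx x \<longleftrightarrow> compact (Qset (sphere 0 1) x 0) \<and>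
          vietoris_conv (\<lambda>n. Qset (sphere 0 1) x (1 / real (Suc n))) (Qset (sphere 0 1) x 0))
    \<and> (SCx x \<longleftrightarrow> compact (Qset (sphere 0 1) x 0) \<and>
          hausdorff_conv (\<lambda>n. Qset (sphere 0 1) x (1 / real (Suc n))) (Qset (sphere 0 1) x 0))
    \<and> (SCx x \<longleftrightarrow> compact (Qset (sphere 0 1) x 0) \<and> SRx x)
    \<and> (SCx x \<longleftrightarrow> (\<lambda>n. kuratowski (Qset (sphere 0 1) x (1 / real (Suc n)))) \<longlonglongrightarrow> 0)"
proof -
  have a: "SCx x \<Longrightarrow> compact (Qset (sphere 0 1) x 0) \<and> SRx x"
    using SC_compact SC_SR x by blast
  have b: "compact (Qset (sphere 0 1) x 0) \<and> SRx x \<Longrightarrow> compact (Qset (sphere 0 1) x 0) \<and>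
          hausdorff_conv (\<lambda>n. Qset (sphere 0 1) x (1 / real (Suc n))) (Qset (sphere 0 1) x 0)"
    using SR_haus by blast
  have c: "compact (Qset (sphere 0 1) x 0) \<and>
          hausdorff_conv (\<lambda>n. Qset (sphere 0 1) x (1 / real (Suc n))) (Qset (sphere 0 1) x 0) \<Longrightarrow>
          compact (Qset (sphere 0 1) x 0) \<and>
          vietoris_conv (\<lambda>n. Qset (sphere 0 1) x (1 / real (Suc n))) (Qset (sphere 0 1) x 0)"
    using compact_haus_viet by blast
  have d: "compact (Qset (sphere 0 1) x 0) \<and>
          vietoris_conv (\<lambda>n. Qset (sphere 0 1) x (1 / real (Suc n))) (Qset (sphere 0 1) x 0) \<Longrightarrow> SCx x"
    using viet_SC x by blast
  have e: "SCx x \<Longrightarrow> (\<lambda>n. kuratowski (Qset (sphere 0 1) x (1 / real (Suc n)))) \<longlonglongrightarrow> 0"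
    using a SC_kur by blast
  have f: "(\<lambda>n. kuratowski (Qset (sphere 0 1) x (1 / real (Suc n)))) \<longlonglongrightarrow> 0 \<Longrightarrow> SCx x"
    using kur_SC x by blast
  show ?thesis using a b c d e f by blast
qed

theorem theorem3p4:
  fixes TYPE_X :: "'a::banach itself"
  defines "S \<equiv> sphere (0::'a) 1"
  shows "(CLUR TYPE('a) \<longleftrightarrow> sup_compact_on S (- {0}))
    \<and> (CLUR TYPE('a) \<longleftrightarrow> (\<forall>x. x \<noteq> 0 \<longrightarrow> compact (Qset S x 0) \<and>
          vietoris_conv (\<lambda>n. Qset S x (1 / real (Suc n))) (Qset S x 0)))
    \<and> (CLUR TYPE('a) \<longleftrightarrow> (\<forall>x. x \<noteq> 0 \<longrightarrow> compact (Qset S x 0) \<and>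
          hausdorff_conv (\<lambda>n. Qset S x (1 / real (Suc n))) (Qset S x 0)))
    \<and> (CLUR TYPE('a) \<longleftrightarrow> (\<forall>x. x \<noteq> 0 \<longrightarrow> compact (Qset S x 0)) \<and>
          strongly_remotal_on S (- {0}))
    \<and> (CLUR TYPE('a) \<longleftrightarrow> (\<forall>x. x \<noteq> 0 \<longrightarrow>
          (\<lambda>n. kuratowski (Qset S x (1 / real (Suc n)))) \<longlonglongrightarrow> 0))"
proof -
  have cl: "CLUR TYPE('a) \<longleftrightarrow> (\<forall>x::'a. x \<noteq> 0 \<longrightarrow> SCx x)"
    using CLUR_to_SC SC_to_CLUR by blast
  have sc: "sup_compact_on S (- {0}) \<longleftrightarrow> (\<forall>x::'a. x \<noteq> 0 \<longrightarrow> SCx x)"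
    unfolding S_def sup_compact_on_def SCx_def Ball_def Compl_iff singleton_iff by (rule refl)
  have sr: "strongly_remotal_on S (- {0}) \<longleftrightarrow> (\<forall>x::'a. x \<noteq> 0 \<longrightarrow> SRx x)"
    unfolding S_def strongly_remotal_on_def SRx_def Ball_def Compl_iff singleton_iff by (rule refl)
  show ?thesis unfolding sc sr cl unfolding S_def using per_x by blast
qed

end
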